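(* Let $d\ge1$ and let $g=(\alpha_1,\dots,\alpha_d)\in(\mathbf{C}^* )^d$ with $\alpha_1,\dots,\alpha_d$ multiplicatively independent. Let $F\in\mathbf{C}[X_1^{\pm1},\dots,X_d^{\pm1}]$ be a Laurent polynomial such that the divisor $D=F^{-1}(0)\subset\mathbf{G}_m^d$ is irreducible and has finite stabilizer. Then the roots of the power sum $n\mapsto F(g^n)$ generate a subgroup of finite index in the multiplicative group generated by $\alpha_1,\dots,\alpha_d$.
   Context: A power sum is a function $n\mapsto \mathbf{f}(n)=\sum_{i=1}^k b_i\alpha_i^n$ with $k\ge1$, nonzero complex coefficients $b_i$ and pairwise distinct nonzero complex numbers $\alpha_i$; this representation is unique and the $\alpha_i$ are called the roots of $\mathbf{f}$. Here $g^n=(\alpha_1^n,\dots,\alpha_d^n)$. The stabilizer of $D\subset\mathbf{G}_m^d$ is $\{x\in\mathbf{G}_m^d: xD=D\}$. *)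

theory Defs
  imports Complex_Main
begin

definition torus :: "nat \<Rightarrow> (nat \<Rightarrow> complex) set" where
  "torus d = {x. (\<forall>i<d. x i \<noteq> 0) \<and> (\<forall>i\<ge>d. x i = 1)}"

text \<open>A Laurent polynomial in X_1..X_d (indices 0..d-1): a finitely supported coefficient
  function on exponent vectors, exponent vectors vanishing at indices at least d.\<close>
definition laurent_poly :: "nat \<Rightarrow> ((nat \<Rightarrow> int) \<Rightarrow> complex) \<Rightarrow> bool" where
  "laurent_poly d c \<longleftrightarrow> finite {e. c e \<noteq> 0} \<and> (\<forall>e. c e \<noteq> 0 \<longrightarrow> (\<forall>i\<ge>d. e i = 0))"

definition lp_eval :: "nat \<Rightarrow> ((nat \<Rightarrow> int) \<Rightarrow> complex) \<Rightarrow> (nat \<Rightarrow> complex) \<Rightarrow> complex" where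
  "lp_eval d c x = (\<Sum>e\<in>{e. c e \<noteq> 0}. c e * (\<Prod>i<d. x i powi e i))"

definition zariski_closed :: "nat \<Rightarrow> (nat \<Rightarrow> complex) set \<Rightarrow> bool" where
  "zariski_closed d Y \<longleftrightarrow> (\<exists>S. (\<forall>p\<in>S. laurent_poly d p) \<and>
      Y = {x\<in>torus d. \<forall>p\<in>S. lp_eval d p x = 0})"

definition zariski_irreducible :: "nat \<Rightarrow> (nat \<Rightarrow> complex) set \<Rightarrow> bool" where
  "zariski_irreducible d X \<longleftrightarrow> X \<noteq> {} \<and>
     (\<forall>Y Z. zariski_closed d Y \<longrightarrow> zariski_closed d Z \<longrightarrow> X = (X \<inter> Y) \<union> (X \<inter> Z)
        \<longrightarrow> X \<subseteq> Y \<or> X \<subseteq> Z)"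

definition stabilizer :: "nat \<Rightarrow> (nat \<Rightarrow> complex) set \<Rightarrow> (nat \<Rightarrow> complex) set" where
  "stabilizer d D = {x\<in>torus d. (\<lambda>y. (\<lambda>i. x i * y i)) ` D = D}"

definition mult_independent :: "nat \<Rightarrow> (nat \<Rightarrow> complex) \<Rightarrow> bool" where
  "mult_independent d a \<longleftrightarrow> (\<forall>k :: nat \<Rightarrow> int. (\<Prod>i<d. a i powi k i) = 1 \<longrightarrow> (\<forall>i<d. k i = 0))"

text \<open>Roots of a power sum f(n) = sum b_i alpha_i^n (n natural), via its unique representation.\<close>
definition power_sum_rep :: "(nat \<Rightarrow> complex) \<Rightarrow> complex set \<Rightarrow> bool" where
  "power_sum_rep f A \<longleftrightarrow> finite A \<and> A \<noteq> {} \<and> 0 \<notin> A \<and>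
     (\<exists>b. (\<forall>a\<in>A. b a \<noteq> 0) \<and> (\<forall>n. f n = (\<Sum>a\<in>A. b a * a ^ n)))"

definition power_sum_roots :: "(nat \<Rightarrow> complex) \<Rightarrow> complex set" where
  "power_sum_roots f = (THE A. power_sum_rep f A)"

inductive_set mgen :: "complex set \<Rightarrow> complex set" for S where
  one: "1 \<in> mgen S"
| mult: "x \<in> mgen S \<Longrightarrow> a \<in> S \<Longrightarrow> x * a \<in> mgen S"
| divi: "x \<in> mgen S \<Longrightarrow> a \<in> S \<Longrightarrow> x * inverse a \<in> mgen S"

definition finite_index :: "complex set \<Rightarrow> complex set \<Rightarrow> bool" where
  "finite_index H G \<longleftrightarrow> H \<subseteq> G \<and> finite ((\<lambda>x. (\<lambda>h. x * h) ` H) ` G)"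

end

theory Submission
  imports Defs
begin


lemma mgen_mul: assumes "y \<in> mgen S" "x \<in> mgen S" shows "x * y \<in> mgen S"
  using assms(1)
proof (induction y)
  case one then show ?case using assms(2) by simp
next
  case (mult y a) then show ?case by (metis mgen.mult mult.assoc)
next
  case (divi y a) then show ?case by (metis mgen.divi mult.assoc)
qed

lemma mgen_inv: assumes "x \<in> mgen S" shows "inverse x \<in> mgen S"
  using assms
proof (induction x)
  case one then show ?case by (simp add: mgen.one)
next
  case (mult y a)
  have "inverse (y * a) = (1 * inverse a) * inverse y" by (simp add: mult.commute)
  then show ?case using mult by (metis mgen.divi mgen.one mgen_mul)
next
  case (divi y a)
  have "inverse (y * inverse a) = (1 * a) * inverse y" by (simp add: mult.commute)
  then show ?case using divi by (metis mgen.mult mgen.one mgen_mul)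
qed

lemma mgen_nz: assumes "x \<in> mgen S" "0 \<notin> S" shows "x \<noteq> 0"
  using assms by (induction x) auto

lemma mgen_base: "a \<in> S \<Longrightarrow> a \<in> mgen S"
  by (metis mgen.mult mgen.one mult_1)

lemma mgen_pow: assumes "a \<in> S" shows "a ^ n \<in> mgen S"
  by (induction n) (auto simp: mgen.one mgen.mult assms mult.commute[of a])

lemma mgen_powi: assumes "a \<in> S" shows "a powi k \<in> mgen S"
proof (cases "k \<ge> 0")
  case True then show ?thesis using mgen_pow[OF assms] by (simp add: power_int_nonneg_exp)
next
  case False
  then have "a powi k = inverse (a powi (-k))" by (simp add: power_int_minus[of a "-k", simplified])
  also have "a powi (-k) = a ^ nat (-k)" using False by (simp add: power_int_nonneg_exp)
  finally show ?thesis using mgen_inv mgen_pow[OF assms] by metis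
qed

lemma mgen_prod: assumes "finite I" "\<And>i. i \<in> I \<Longrightarrow> f i \<in> mgen S" shows "prod f I \<in> mgen S"
  using assms by (induction I rule: finite_induct) (auto simp: mgen.one mgen_mul)

lemma mgen_mono: assumes "x \<in> mgen S" "S \<subseteq> mgen T" shows "x \<in> mgen T"
  using assms
  by (induction x) (auto simp: mgen.one intro: mgen_mul mgen_inv)

lemma ps_zero: assumes "finite C" "\<forall>n. (\<Sum>a\<in>C. c a * a ^ n) = (0::complex)" shows "\<forall>a\<in>C. c a = 0"
  using assms
proof (induction C arbitrary: c rule: finite_induct)
  case empty then show ?case by simp
next
  case (insert a0 C)
  have h: "\<And>n. c a0 * a0 ^ n + (\<Sum>a\<in>C. c a * a ^ n) = 0" using insert by simp
  have "\<forall>n. (\<Sum>a\<in>C. (c a * (a - a0)) * a ^ n) = 0"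
  proof
    fix n
    have "(\<Sum>a\<in>C. (c a * (a - a0)) * a ^ n) = (\<Sum>a\<in>C. c a * a ^ Suc n) - a0 * (\<Sum>a\<in>C. c a * a ^ n)"
      by (simp add: sum_distrib_left sum_subtractf algebra_simps)
    also have "\<dots> = - (c a0 * a0 ^ Suc n) - a0 * (- (c a0 * a0 ^ n))"
    proof -
      have e1: "(\<Sum>a\<in>C. c a * a ^ Suc n) = - (c a0 * a0 ^ Suc n)"
        by (metis add.commute eq_neg_iff_add_eq_0 h)
      have e2: "(\<Sum>a\<in>C. c a * a ^ n) = - (c a0 * a0 ^ n)"
        by (metis add.commute eq_neg_iff_add_eq_0 h)
      show ?thesis by (simp only: e1 e2)
    qed
    also have "\<dots> = 0" by simp
    finally show "(\<Sum>a\<in>C. (c a * (a - a0)) * a ^ n) = 0" .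
  qed
  then have "\<forall>a\<in>C. c a * (a - a0) = 0" using insert.IH[of "\<lambda>a. c a * (a - a0)"] by blast
  then have C0: "\<forall>a\<in>C. c a = 0" using insert.hyps(2) by auto
  then have "c a0 = 0" using h[of 0] by simp
  then show ?case using C0 by simp
qed

lemma ps_unique: assumes "power_sum_rep f A" "power_sum_rep f B" shows "A \<subseteq> B"
proof
  fix x assume xA: "x \<in> A"
  obtain b where b: "\<forall>a\<in>A. b a \<noteq> 0" "\<forall>n. f n = (\<Sum>a\<in>A. b a * a ^ n)" and fA: "finite A"
    using assms(1) unfolding power_sum_rep_def by blast
  obtain b' where b': "\<forall>n. f n = (\<Sum>a\<in>B. b' a * a ^ n)" and fB: "finite B"
    using assms(2) unfolding power_sum_rep_def by blast
  define c where "c a = (if a \<in> A then b a else 0) - (if a \<in> B then b' a else 0)" for a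
  have "\<forall>n. (\<Sum>a\<in>A \<union> B. c a * a ^ n) = 0"
  proof
    fix n
    have "(\<Sum>a\<in>A \<union> B. c a * a ^ n) = (\<Sum>a\<in>A \<union> B. (if a \<in> A then b a * a ^ n else 0))
        - (\<Sum>a\<in>A \<union> B. (if a \<in> B then b' a * a ^ n else 0))"
    proof -
      have "\<And>a. c a * a ^ n = (if a \<in> A then b a * a ^ n else 0) - (if a \<in> B then b' a * a ^ n else 0)"
        by (simp add: c_def algebra_simps)
      then show ?thesis by (simp add: sum_subtractf)
    qed
    also have "(\<Sum>a\<in>A \<union> B. (if a \<in> A then b a * a ^ n else 0)) = (\<Sum>a\<in>A. b a * a ^ n)"
      using fA fB by (simp add: sum.If_cases Int_absorb1)
    also have "(\<Sum>a\<in>A \<union> B. (if a \<in> B then b' a * a ^ n else 0)) = (\<Sum>a\<in>B. b' a * a ^ n)"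
      using fA fB by (simp add: sum.If_cases Int_absorb1)
    finally show "(\<Sum>a\<in>A \<union> B. c a * a ^ n) = 0" using b(2) b' by simp
  qed
  then have "c x = 0" using ps_zero[of "A \<union> B" c] fA fB xA by blast
  then show "x \<in> B" using xA b(1) unfolding c_def by (auto split: if_splits)
qed

lemma ps_roots: assumes "power_sum_rep f A" shows "power_sum_roots f = A"
  unfolding power_sum_roots_def
  by (rule the_equality[where P="power_sum_rep f", OF assms]) (meson assms ps_unique subset_antisym)



definition subg :: "(nat \<Rightarrow> int) set \<Rightarrow> bool" where
  "subg L \<longleftrightarrow> (\<lambda>_. 0) \<in> L \<and> (\<forall>u\<in>L. \<forall>w\<in>L. (\<lambda>i. u i + w i) \<in> L) \<and> (\<forall>u\<in>L. (\<lambda>i. - u i) \<in> L)"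

lemma subg_smult_nat: assumes "subg L" "u \<in> L" shows "(\<lambda>i. int n * u i) \<in> L"
proof (induction n)
  case 0 then show ?case using assms unfolding subg_def by simp
next
  case (Suc n)
  have "(\<lambda>i. int (Suc n) * u i) = (\<lambda>i. (\<lambda>i. int n * u i) i + u i)" by (simp add: algebra_simps)
  then show ?case using Suc assms unfolding subg_def by metis
qed

lemma subg_smult: assumes "subg L" "u \<in> L" shows "(\<lambda>i. c * u i) \<in> L"
proof (cases "c \<ge> 0")
  case True then show ?thesis using subg_smult_nat[OF assms, of "nat c"] by simp
next
  case False
  have "(\<lambda>i. c * u i) = (\<lambda>i. - (\<lambda>i. int (nat (-c)) * u i) i)" using False by auto
  then show ?thesis using subg_smult_nat[OF assms, of "nat (-c)"] assms(1) unfolding subg_def by metis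
qed

lemma subg_sum: assumes "subg L" "finite J" "\<And>j. j \<in> J \<Longrightarrow> (\<lambda>i. f j i) \<in> L"
  shows "(\<lambda>i. \<Sum>j\<in>J. f j i) \<in> L"
  using assms(2,3)
proof (induction J rule: finite_induct)
  case empty then show ?case using assms(1) unfolding subg_def by simp
next
  case (insert x F)
  have "(\<lambda>i. \<Sum>j\<in>insert x F. f j i) = (\<lambda>i. (\<lambda>i. f x i) i + (\<lambda>i. \<Sum>j\<in>F. f j i) i)"
    using insert by simp
  then show ?case using insert assms(1) unfolding subg_def by (metis insertI1 insertI2)
qed

lemma subg_diff: assumes "subg L" "u \<in> L" "w \<in> L" shows "(\<lambda>i. u i - w i) \<in> L"
proof -
  have "(\<lambda>i. u i - w i) = (\<lambda>i. u i + (\<lambda>i. - w i) i)" by simp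
  then show ?thesis using assms unfolding subg_def by metis
qed

lemma lattice_dichotomy:
  assumes "subg L" "\<forall>u\<in>L. \<forall>i\<ge>d. u i = 0"
  shows "(\<exists>v. (\<exists>i<d. v i \<noteq> 0) \<and> (\<forall>u\<in>L. (\<Sum>i<d. v i * u i) = 0))
       \<or> (\<exists>m>0. \<forall>i<d. (\<lambda>j. if j = i then m else 0) \<in> L)"
  using assms
proof (induction d arbitrary: L)
  case 0 then show ?case by (intro disjI2 exI[of _ 1]) auto
next
  case (Suc d)
  show ?case
  proof (cases "\<forall>u\<in>L. u d = 0")
    case True
    show ?thesis
      by (rule disjI1, rule exI[of _ "\<lambda>i. if i = d then 1 else 0"]) (use True in auto)
  next
    case False
    then obtain w where wL: "w \<in> L" and a0: "w d \<noteq> 0" by blast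
    define a where "a = w d"
    define L' where "L' = (\<lambda>u. \<lambda>i. a * u i - u d * w i) ` L"
    have LL: "\<And>u. u \<in> L \<Longrightarrow> (\<lambda>i. a * u i - u d * w i) \<in> L"
      using subg_diff[OF Suc.prems(1) subg_smult[OF Suc.prems(1)] subg_smult[OF Suc.prems(1) wL]] by blast
    then have L'L: "L' \<subseteq> L" unfolding L'_def by blast
    have sL': "subg L'"
      unfolding subg_def
    proof (intro conjI ballI)
      show "(\<lambda>_. 0) \<in> L'" unfolding L'_def
        using Suc.prems(1) unfolding subg_def by (auto intro!: image_eqI[of _ _ "\<lambda>_. 0"])
    next
      fix u w' assume "u \<in> L'" "w' \<in> L'"
      then obtain u0 w0 where "u0 \<in> L" "w0 \<in> L" "u = (\<lambda>i. a * u0 i - u0 d * w i)" "w' = (\<lambda>i. a * w0 i - w0 d * w i)"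
        unfolding L'_def by blast
      moreover have "(\<lambda>i. u0 i + w0 i) \<in> L" using Suc.prems(1) \<open>u0 \<in> L\<close> \<open>w0 \<in> L\<close> unfolding subg_def by blast
      ultimately show "(\<lambda>i. u i + w' i) \<in> L'" unfolding L'_def
        by (auto intro!: image_eqI[of _ _ "\<lambda>i. u0 i + w0 i"] simp: algebra_simps)
    next
      fix u assume "u \<in> L'"
      then obtain u0 where "u0 \<in> L" "u = (\<lambda>i. a * u0 i - u0 d * w i)"
        unfolding L'_def by blast
      moreover have "(\<lambda>i. - u0 i) \<in> L" using Suc.prems(1) \<open>u0 \<in> L\<close> unfolding subg_def by blast
      ultimately show "(\<lambda>i. - u i) \<in> L'" unfolding L'_def
        by (auto intro!: image_eqI[of _ _ "\<lambda>i. - u0 i"] simp: algebra_simps)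
    qed
    have supp': "\<forall>u\<in>L'. \<forall>i\<ge>d. u i = 0"
    proof (intro ballI allI impI)
      fix u i assume "u \<in> L'" "d \<le> i"
      then obtain u0 where u0: "u0 \<in> L" "u = (\<lambda>i. a * u0 i - u0 d * w i)" unfolding L'_def by blast
      show "u i = 0"
      proof (cases "i = d")
        case True then show ?thesis using u0 a_def by simp
      next
        case False then have "Suc d \<le> i" using \<open>d \<le> i\<close> by simp
        then have "u0 i = 0" "w i = 0" using u0 wL Suc.prems(2) by auto
        then show ?thesis using u0 by simp
      qed
    qed
    from Suc.IH[OF sL' supp'] show ?thesis
    proof
      assume "\<exists>v. (\<exists>i<d. v i \<noteq> 0) \<and> (\<forall>u\<in>L'. (\<Sum>i<d. v i * u i) = 0)"
      then obtain v' where v'1: "\<exists>i<d. v' i \<noteq> 0" and v'2: "\<forall>u\<in>L'. (\<Sum>i<d. v' i * u i) = 0" by blast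
      define v where "v i = (if i < d then a * v' i else if i = d then - (\<Sum>j<d. v' j * w j) else 0)" for i
      have "\<exists>i<Suc d. v i \<noteq> 0" using v'1 a0 unfolding v_def a_def by auto
      moreover have "\<forall>u\<in>L. (\<Sum>i<Suc d. v i * u i) = 0"
      proof
        fix u assume uL: "u \<in> L"
        have "(\<Sum>i<Suc d. v i * u i) = (\<Sum>i<d. a * v' i * u i) - (\<Sum>j<d. v' j * w j) * u d"
          by (simp add: v_def)
        also have "\<dots> = (\<Sum>i<d. v' i * (a * u i - u d * w i))"
          by (simp add: sum_distrib_right sum_distrib_left sum_subtractf algebra_simps)
        also have "\<dots> = 0" using v'2 uL unfolding L'_def by auto
        finally show "(\<Sum>i<Suc d. v i * u i) = 0" .
      qed
      ultimately show ?thesis by blast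
    next
      assume "\<exists>m>0. \<forall>i<d. (\<lambda>j. if j = i then m else 0) \<in> L'"
      then obtain m where m0: "m > 0" and mL: "\<forall>i<d. (\<lambda>j. if j = i then m else 0) \<in> L" using L'L by blast
      define M where "M = m * \<bar>a\<bar>"
      have M0: "M > 0" using m0 a0 unfolding M_def a_def by simp
      have "\<forall>i<Suc d. (\<lambda>j. if j = i then M else 0) \<in> L"
      proof (intro allI impI)
        fix i assume "i < Suc d"
        show "(\<lambda>j. if j = i then M else 0) \<in> L"
        proof (cases "i < d")
          case True
          have "(\<lambda>j. if j = i then M else 0) = (\<lambda>j. \<bar>a\<bar> * (\<lambda>j. if j = i then m else 0) j)"
            unfolding M_def by (auto simp: algebra_simps)
          then show ?thesis using subg_smult[OF Suc.prems(1) mL[rule_format, OF True]] by metis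
        next
          case False
          then have id: "i = d" using \<open>i < Suc d\<close> by simp
          define z where "z = (\<lambda>j. m * w j - (\<Sum>k<d. w k * (if j = k then m else 0)))"
          have zL: "z \<in> L" unfolding z_def
            by (rule subg_diff[OF Suc.prems(1) subg_smult[OF Suc.prems(1) wL]],
                rule subg_sum[OF Suc.prems(1)], simp,
                rule subg_smult[OF Suc.prems(1)], use mL in auto)
          have "z = (\<lambda>j. if j = d then m * a else 0)"
          proof
            fix j
            show "z j = (if j = d then m * a else 0)"
            proof (cases "j < d")
              case True
              have "(\<Sum>k<d. w k * (if j = k then m else 0)) = w j * m"
                using True by (simp add: if_distrib[of "\<lambda>x. w _ * x"] sum.delta cong: if_cong)
              then show ?thesis using True unfolding z_def by simp
            next
              case False
              have "(\<Sum>k<d. w k * (if j = k then m else 0)) = 0" using False by (intro sum.neutral) auto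
              moreover have "j \<noteq> d \<Longrightarrow> w j = 0" using False wL Suc.prems(2) by auto
              ultimately show ?thesis unfolding z_def a_def by auto
            qed
          qed
          then have "(\<lambda>j. if j = i then M else 0) = (\<lambda>j. sgn a * z j)"
            unfolding M_def id by (auto simp: abs_sgn mult.commute mult.left_commute)
          then show ?thesis using subg_smult[OF Suc.prems(1) zL] by metis
        qed
      qed
      then show ?thesis using M0 by blast
    qed
  qed
qed



lemma prod_powi_sum: assumes "(x::complex) \<noteq> 0" "finite I"
  shows "(\<Prod>i\<in>I. x powi f i) = x powi (\<Sum>i\<in>I. f i)"
  using assms(2) by (induction I rule: finite_induct) (auto simp: power_int_add assms(1))

lemma eval_shift:
  assumes "\<forall>e. F e \<noteq> 0 \<longrightarrow> (\<Prod>i<d. x i powi e i) = 1"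
  shows "lp_eval d F (\<lambda>i. x i * y i) = lp_eval d F y"
  unfolding lp_eval_def
proof (rule sum.cong[OF refl])
  fix e assume "e \<in> {e. F e \<noteq> 0}"
  then have "(\<Prod>i<d. x i powi e i) = 1" using assms by auto
  then show "F e * (\<Prod>i<d. (x i * y i) powi e i) = F e * (\<Prod>i<d. y i powi e i)"
    by (simp add: power_int_mult_distrib prod.distrib)
qed

definition Xv :: "nat \<Rightarrow> (nat \<Rightarrow> int) \<Rightarrow> nat \<Rightarrow> nat \<Rightarrow> complex" where
  "Xv d v t i = (if i < d then ((2::complex) powi v i) ^ t else 1)"

lemma Xv_char: assumes "(\<Sum>i<d. v i * e i) = 0" shows "(\<Prod>i<d. Xv d v t i powi e i) = 1"
proof -
  have "(\<Prod>i<d. Xv d v t i powi e i) = (\<Prod>i<d. (2::complex) powi (v i * (int t * e i)))"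
    by (rule prod.cong) (auto simp: Xv_def power_int_power power_int_mult[symmetric] algebra_simps)
  also have "\<dots> = (2::complex) powi (\<Sum>i<d. v i * (int t * e i))" by (rule prod_powi_sum) auto
  also have "(\<Sum>i<d. v i * (int t * e i)) = int t * (\<Sum>i<d. v i * e i)"
    by (simp add: sum_distrib_left algebra_simps)
  finally show ?thesis using assms by simp
qed

lemma Xv_torus: "Xv d v t \<in> torus d"
  unfolding torus_def Xv_def by auto

lemma Xv_inv: "i < d \<Longrightarrow> Xv d v t i * Xv d (\<lambda>i. - v i) t i = 1"
  unfolding Xv_def by (simp add: power_int_minus power_mult_distrib[symmetric])

lemma Xv_stab:
  assumes ort: "\<forall>e. F e \<noteq> 0 \<longrightarrow> (\<Sum>i<d. v i * e i) = 0"
  shows "Xv d v t \<in> stabilizer d {x\<in>torus d. lp_eval d F x = 0}"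
proof -
  let ?D = "{x\<in>torus d. lp_eval d F x = 0}"
  have o1: "\<forall>e. F e \<noteq> 0 \<longrightarrow> (\<Prod>i<d. Xv d v t i powi e i) = 1" using ort Xv_char by blast
  have o2: "\<forall>e. F e \<noteq> 0 \<longrightarrow> (\<Prod>i<d. Xv d (\<lambda>i. - v i) t i powi e i) = 1"
    using ort Xv_char[where v="\<lambda>i. - v i"] by (simp add: sum_negf)
  have mt: "\<And>x y. x \<in> torus d \<Longrightarrow> y \<in> torus d \<Longrightarrow> (\<lambda>i. x i * y i) \<in> torus d"
    unfolding torus_def by auto
  have "(\<lambda>y. (\<lambda>i. Xv d v t i * y i)) ` ?D = ?D"
  proof
    show "(\<lambda>y. (\<lambda>i. Xv d v t i * y i)) ` ?D \<subseteq> ?D"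
      using eval_shift[OF o1] mt Xv_torus by auto
  next
    show "?D \<subseteq> (\<lambda>y. (\<lambda>i. Xv d v t i * y i)) ` ?D"
    proof
      fix y assume y: "y \<in> ?D"
      let ?z = "\<lambda>i. Xv d (\<lambda>i. - v i) t i * y i"
      have zD: "?z \<in> ?D" using y eval_shift[OF o2] mt Xv_torus by auto
      have "y = (\<lambda>i. Xv d v t i * ?z i)"
      proof
        fix i show "y i = Xv d v t i * ?z i"
        proof (cases "i < d")
          case True then show ?thesis using Xv_inv[OF True, of v t] by (simp add: mult.assoc[symmetric])
        next
          case False then show ?thesis by (simp add: Xv_def)
        qed
      qed
      then show "y \<in> (\<lambda>y. (\<lambda>i. Xv d v t i * y i)) ` ?D" using zD by (rule image_eqI)
    qed
  qed
  then show ?thesis unfolding stabilizer_def using Xv_torus by auto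
qed

lemma stab_inf:
  assumes "j < d" "v j \<noteq> 0" "\<forall>e. F e \<noteq> 0 \<longrightarrow> (\<Sum>i<d. v i * e i) = 0"
  shows "infinite (stabilizer d {x\<in>torus d. lp_eval d F x = 0})"
proof -
  obtain w where wj: "w j > 0" and ort: "\<forall>e. F e \<noteq> 0 \<longrightarrow> (\<Sum>i<d. w i * e i) = 0"
  proof (cases "v j > 0")
    case True then show ?thesis using that assms(3) by blast
  next
    case False
    then have "(\<lambda>i. - v i) j > 0" using assms(2) by simp
    moreover have "\<forall>e. F e \<noteq> 0 \<longrightarrow> (\<Sum>i<d. (\<lambda>i. - v i) i * e i) = 0" using assms(3) by (simp add: sum_negf)
    ultimately show ?thesis using that[of "\<lambda>i. - v i"] by blast
  qed
  have inj: "inj (Xv d w)"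
  proof (rule injI)
    fix s t assume "Xv d w s = Xv d w t"
    then have "Xv d w s j = Xv d w t j" by simp
    moreover have "\<And>t. Xv d w t j = of_nat ((2 ^ nat (w j)) ^ t)"
      using assms(1) wj by (simp add: Xv_def power_int_def)
    ultimately have "((2::nat) ^ nat (w j)) ^ s = (2 ^ nat (w j)) ^ t"
      by (metis of_nat_eq_iff)
    moreover have "1 < (2::nat) ^ nat (w j)" using wj by (intro one_less_power) auto
    ultimately show "s = t" using power_inject_exp by blast
  qed
  have "range (Xv d w) \<subseteq> stabilizer d {x\<in>torus d. lp_eval d F x = 0}"
    using Xv_stab[OF ort] by blast
  moreover have "infinite (range (Xv d w))" using inj finite_imageD by blast
  ultimately show ?thesis using finite_subset by blast
qed



lemma coset_self: assumes "k \<in> mgen S" "0 \<notin> S" shows "(\<lambda>h. k * h) ` mgen S = mgen S"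
proof
  show "(\<lambda>h. k * h) ` mgen S \<subseteq> mgen S" using assms(1) mgen_mul by blast
next
  show "mgen S \<subseteq> (\<lambda>h. k * h) ` mgen S"
  proof
    fix h assume h: "h \<in> mgen S"
    have "k \<noteq> 0" using mgen_nz assms by blast
    then have "h = k * (inverse k * h)" by simp
    moreover have "inverse k * h \<in> mgen S" using mgen_mul[OF h mgen_inv[OF assms(1)]] .
    ultimately show "h \<in> (\<lambda>h. k * h) ` mgen S" by blast
  qed
qed

theorem lemma5p2:
  fixes d :: nat and g :: "nat \<Rightarrow> complex" and F :: "(nat \<Rightarrow> int) \<Rightarrow> complex"
  assumes "d \<ge> 1"
    and "\<forall>i<d. g i \<noteq> 0"
    and "mult_independent d g"
    and "laurent_poly d F"
    and "zariski_irreducible d {x\<in>torus d. lp_eval d F x = 0}"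
    and "finite (stabilizer d {x\<in>torus d. lp_eval d F x = 0})"
  shows "finite_index
           (mgen (power_sum_roots (\<lambda>n. lp_eval d F (\<lambda>i. if i < d then g i ^ n else 1))))
           (mgen (g ` {..<d}))"
proof -
  define S where "S = {e. F e \<noteq> 0}"
  have fS: "finite S" and suppS: "\<And>e i. e \<in> S \<Longrightarrow> d \<le> i \<Longrightarrow> e i = 0"
    using assms(4) unfolding laurent_poly_def S_def by auto
  define gp where "gp e = (\<Prod>i<d. g i powi e i)" for e
  have gp_add: "gp (\<lambda>i. e i + e' i) = gp e * gp e'" for e e'
    unfolding gp_def using assms(2) by (simp add: power_int_add prod.distrib)
  have gp_neg: "gp (\<lambda>i. - e i) = inverse (gp e)" for e
    unfolding gp_def using prod_inversef[of "\<lambda>i. g i powi e i" "{..<d}"]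
    by (simp add: power_int_minus comp_def)
  have gp_nz: "gp e \<noteq> 0" for e unfolding gp_def using assms(2) by simp
  have gp_inj: "inj_on gp S"
  proof (rule inj_onI)
    fix e e' assume e: "e \<in> S" "e' \<in> S" "gp e = gp e'"
    have "gp (\<lambda>i. e i + (\<lambda>i. - e' i) i) = 1" using e(3) gp_nz by (simp only: gp_add gp_neg) simp
    then have "(\<Prod>i<d. g i powi (e i - e' i)) = 1" unfolding gp_def by simp
    moreover have "(\<Prod>i<d. g i powi (\<lambda>i. e i - e' i) i) = 1 \<longrightarrow> (\<forall>i<d. (\<lambda>i. e i - e' i) i = 0)"
      using assms(3) unfolding mult_independent_def by (rule spec)
    ultimately have "\<forall>i<d. e i - e' i = 0" by simp
    show "e = e'"
    proof (rule ext)
      fix i show "e i = e' i"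
      proof (cases "i < d")
        case True then show ?thesis using \<open>\<forall>i<d. e i - e' i = 0\<close> by simp
      next
        case False then show ?thesis using suppS[OF e(1)] suppS[OF e(2)] by simp
      qed
    qed
  qed
  define R where "R = gp ` S"
  define H where "H = mgen R"
  define G where "G = mgen (g ` {..<d})"
  have R0: "0 \<notin> R" unfolding R_def using gp_nz by auto
  have Sne: "S \<noteq> {}"
  proof
    assume "S = {}"
    then have "\<forall>e. F e \<noteq> 0 \<longrightarrow> (\<Sum>i<d. (\<lambda>i. 1::int) i * e i) = 0" unfolding S_def by auto
    then have "infinite (stabilizer d {x\<in>torus d. lp_eval d F x = 0})"
      using stab_inf[of 0 d "\<lambda>i. 1"] assms(1) by auto
    then show False using assms(6) by blast
  qed
  define f where "f = (\<lambda>n. lp_eval d F (\<lambda>i. if i < d then g i ^ n else 1))"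
  have f_eq: "f n = (\<Sum>e\<in>S. F e * gp e ^ n)" for n
    unfolding f_def lp_eval_def S_def[symmetric]
  proof (rule sum.cong[OF refl])
    fix e
    have "(\<Prod>i<d. (if i < d then g i ^ n else 1) powi e i) = (\<Prod>i<d. (g i powi e i) ^ n)"
      by (rule prod.cong) (auto simp: power_int_power power_int_power' mult.commute)
    then show "F e * (\<Prod>i<d. (if i < d then g i ^ n else 1) powi e i) = F e * gp e ^ n"
      by (simp add: gp_def prod_power_distrib)
  qed
  define b where "b a = F (the_inv_into S gp a)" for a
  have "power_sum_rep f R"
    unfolding power_sum_rep_def
  proof (intro conjI)
    show "finite R" "R \<noteq> {}" "0 \<notin> R" using fS Sne R0 unfolding R_def by auto
    show "\<exists>b. (\<forall>a\<in>R. b a \<noteq> 0) \<and> (\<forall>n. f n = (\<Sum>a\<in>R. b a * a ^ n))"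
    proof (intro exI[of _ b] conjI allI ballI)
      fix a assume "a \<in> R"
      then obtain e where "e \<in> S" "a = gp e" unfolding R_def by blast
      then show "b a \<noteq> 0" unfolding b_def using the_inv_into_f_f[OF gp_inj] S_def by auto
    next
      fix n
      have "(\<Sum>a\<in>R. b a * a ^ n) = (\<Sum>e\<in>S. b (gp e) * gp e ^ n)"
        unfolding R_def by (simp add: sum.reindex[OF gp_inj])
      also have "\<dots> = (\<Sum>e\<in>S. F e * gp e ^ n)"
        by (rule sum.cong) (auto simp: b_def the_inv_into_f_f[OF gp_inj])
      finally show "f n = (\<Sum>a\<in>R. b a * a ^ n)" using f_eq by simp
    qed
  qed
  then have roots: "power_sum_roots f = R" by (rule ps_roots)
  define L where "L = {u. (\<forall>i\<ge>d. u i = 0) \<and> gp u \<in> H}"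
  have sL: "subg L"
    unfolding subg_def L_def H_def
  proof (intro conjI ballI)
    show "(\<lambda>_. 0) \<in> {u. (\<forall>i\<ge>d. u i = 0) \<and> gp u \<in> mgen R}"
      by (simp add: gp_def mgen.one)
  next
    fix u w assume "u \<in> {u. (\<forall>i\<ge>d. u i = 0) \<and> gp u \<in> mgen R}" "w \<in> {u. (\<forall>i\<ge>d. u i = 0) \<and> gp u \<in> mgen R}"
    then show "(\<lambda>i. u i + w i) \<in> {u. (\<forall>i\<ge>d. u i = 0) \<and> gp u \<in> mgen R}"
      by (simp add: gp_add mgen_mul)
  next
    fix u assume "u \<in> {u. (\<forall>i\<ge>d. u i = 0) \<and> gp u \<in> mgen R}"
    then show "(\<lambda>i. - u i) \<in> {u. (\<forall>i\<ge>d. u i = 0) \<and> gp u \<in> mgen R}"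
      by (simp add: gp_neg mgen_inv)
  qed
  have SL: "S \<subseteq> L" unfolding L_def H_def R_def using suppS by (auto intro: mgen_base)
  have supL: "\<forall>u\<in>L. \<forall>i\<ge>d. u i = 0" unfolding L_def by auto
  from lattice_dichotomy[OF sL supL] obtain m where m0: "m > 0"
    and mL: "\<forall>i<d. (\<lambda>j. if j = i then m else 0) \<in> L"
  proof (elim disjE)
    assume "\<exists>v. (\<exists>i<d. v i \<noteq> 0) \<and> (\<forall>u\<in>L. (\<Sum>i<d. v i * u i) = 0)"
    then obtain v j where "j < d" "v j \<noteq> 0" "\<forall>u\<in>L. (\<Sum>i<d. v i * u i) = 0" by blast
    then have "infinite (stabilizer d {x\<in>torus d. lp_eval d F x = 0})"
      using SL by (intro stab_inf[of j d v]) (auto simp: S_def)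
    then show ?thesis using assms(6) by blast
  qed blast
  have gpG: "gp e \<in> G" for e
    unfolding gp_def G_def by (intro mgen_prod mgen_powi) auto
  have HG: "H \<subseteq> G"
  proof
    fix x assume "x \<in> H"
    then show "x \<in> G" unfolding H_def G_def
      by (rule mgen_mono) (use gpG in \<open>auto simp: R_def G_def\<close>)
  qed
  have gp_delta: "gp (\<lambda>i. if i = j then 1 else 0) = g j" if "j < d" for j
  proof -
    have "gp (\<lambda>i. if i = j then 1 else 0) = (\<Prod>i<d. if i = j then g i else 1)"
      unfolding gp_def by (rule prod.cong) auto
    then show ?thesis using that by (simp add: prod.delta)
  qed
  have Grep: "\<exists>u. (\<forall>i\<ge>d. u i = 0) \<and> x = gp u" if "x \<in> G" for x
    using that unfolding G_def
  proof (induction x)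
    case one then show ?case by (intro exI[of _ "\<lambda>_. 0"]) (simp add: gp_def)
  next
    case (mult x a)
    from mult.IH obtain u where u: "\<forall>i\<ge>d. u i = 0" "x = gp u" by blast
    from mult.hyps(2) obtain j where j: "j < d" "a = g j" by blast
    let ?w = "\<lambda>i. u i + (\<lambda>i. if i = j then 1 else 0) i"
    have "x * a = gp ?w" by (simp only: gp_add gp_delta[OF j(1)] u j)
    moreover have "\<forall>i\<ge>d. ?w i = 0" using u(1) j(1) by auto
    ultimately show ?case by (intro exI[of _ ?w] conjI)
  next
    case (divi x a)
    from divi.IH obtain u where u: "\<forall>i\<ge>d. u i = 0" "x = gp u" by blast
    from divi.hyps(2) obtain j where j: "j < d" "a = g j" by blast
    let ?w = "\<lambda>i. u i + (\<lambda>i. - (\<lambda>i. if i = j then 1 else 0) i) i"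
    have "x * inverse a = gp ?w" by (simp only: gp_add gp_neg gp_delta[OF j(1)] u j)
    moreover have "\<forall>i\<ge>d. ?w i = 0" using u(1) j(1) by auto
    ultimately show ?case by (intro exI[of _ ?w] conjI)
  qed
  define Rset where "Rset = {r. \<forall>i. (i \<in> {..<d} \<longrightarrow> r i \<in> {0..<m}) \<and> (i \<notin> {..<d} \<longrightarrow> r i = 0)}"
  have fR: "finite Rset" unfolding Rset_def by (rule finite_set_of_finite_funs) auto
  have "(\<lambda>x. (\<lambda>h. x * h) ` H) ` G \<subseteq> (\<lambda>r. (\<lambda>h. gp r * h) ` H) ` Rset"
  proof
    fix C assume "C \<in> (\<lambda>x. (\<lambda>h. x * h) ` H) ` G"
    then obtain x where xG: "x \<in> G" and C: "C = (\<lambda>h. x * h) ` H" by blast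
    obtain u where u: "\<forall>i\<ge>d. u i = 0" "x = gp u" using Grep[OF xG] by blast
    define r where "r i = u i mod m" for i
    define q where "q i = u i div m" for i
    have rR: "r \<in> Rset" unfolding Rset_def r_def using u m0 by auto
    define mq where "mq = (\<lambda>j. \<Sum>i<d. q i * (if j = i then m else 0))"
    have mqL: "mq \<in> L" unfolding mq_def
      by (rule subg_sum[OF sL], simp, rule subg_smult[OF sL], use mL in auto)
    have mq_eq: "mq j = m * q j" for j
    proof (cases "j < d")
      case True
      then show ?thesis unfolding mq_def
        by (simp add: if_distrib[of "\<lambda>x. q _ * x"] sum.delta cong: if_cong)
    next
      case False then show ?thesis unfolding mq_def q_def using u by auto
    qed
    have "u = (\<lambda>i. r i + mq i)"
      by (rule ext) (simp add: mq_eq r_def q_def)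
    then have xe: "x = gp r * gp mq" using u(2) gp_add[of r mq] by simp
    have kH: "gp mq \<in> H" using mqL unfolding L_def by blast
    have "C = (\<lambda>h. gp r * h) ` ((\<lambda>h. gp mq * h) ` H)"
      unfolding C xe image_image by (simp add: mult.assoc)
    also have "(\<lambda>h. gp mq * h) ` H = H" unfolding H_def
      using coset_self[OF kH[unfolded H_def] R0] .
    finally have "C = (\<lambda>h. gp r * h) ` H" .
    then show "C \<in> (\<lambda>r. (\<lambda>h. gp r * h) ` H) ` Rset" by (rule image_eqI[OF _ rR])
  qed
  then have "finite ((\<lambda>x. (\<lambda>h. x * h) ` H) ` G)" by (rule finite_subset) (rule finite_imageI[OF fR])
  then have "finite_index H G" unfolding finite_index_def using HG by simp
  then show ?thesis using roots unfolding H_def G_def f_def by simp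
qed


end
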